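(* Let $\mathcal{A}$ be a (finite) activation algebra and $M$ a finite set of morphisms of $\mathcal{T}_\mathcal{A}$. If $\tau\in M^\omega$ has an accepting run $(\Theta_i,\sigma_i)_{i\in\omega}$, then $\tau$ describes a path through $\mathcal{T}_\mathcal{A}$ which satisfies the trace condition of $\mathcal{T}_\mathcal{A}$.
   Context: An activation algebra $\mathcal{A}=(A,\le,\vee,0,\alpha)$ is a finite join-semilattice $(A,\le,\vee)$ with least element $0$, together with a distinguished element $\alpha\in A$ with $\alpha\neq 0$. The category $\mathcal{T}_\mathcal{A}$ has the finite sets as objects; a morphism $R\colon X\to Y$ is a relation $R\subseteq X\times A\times Y$; the composite of $R\colon X\to Y$ and $R'\colon Y\to Z$ is $R'\circ R=\{(x,c,z)\mid \exists y\in Y,\ a,b\in A:\ (x,a,y)\in R,\ (y,b,z)\in R',\ a\vee b=c\}$, and the identity is $1_X=\{(x,0,x)\mid x\in X\}$. A sequence $\tau\in M^\omega$ of morphisms describes a path if $\mathrm{cod}(\tau_i)=\mathrm{dom}(\tau_{i+1})$ for all $i$; write $P(n<m)=\tau_{m-1}\circ\cdots\circ\tau_n$ for $n<m$. Such a path satisfies the trace condition if there exist a strictly increasing sequence $k_0<k_1<\cdots$ of natural numbers and elements $s_i\in\mathrm{dom}(\tau_{k_i})$ with $(s_i,\alpha,s_{i+1})\in P(k_i<k_{i+1})$ for all $i$. Safra boards. Fix a countable set $\mathcal{C}\supseteq\omega$ of chips. A Safra board on $\mathcal{A}$ and a finite set $X$ is a pair $(\Theta,\sigma)$ where the control $\Theta\subseteq\mathcal{C}$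 is a finite set with a linear order $\le$, and $\sigma\colon X\times A\to\mathcal{P}(\mathcal{P}(\Theta))$, such that every $\gamma\in\Theta$ belongs to some $S\in\sigma(x,a)$. The elements $S\in\sigma(x,a)$ are called stacks (bottom = $\le$-least, top = $\le$-greatest element). A chip $\gamma\in\Theta$ is covered if it is not the top element of any stack $S\in\sigma(x,a)$, for any $x,a$. Transitions between boards: (i) $\tau$-successor, for $\tau\colon X\to Y$, written $(\Theta,\sigma)\xrightarrow{\tau}(\Theta',\sigma')$: first let $\sigma^*(y,a)=\{S\mid S\in\sigma(x,b)\text{ for some }x\in X,b\in A, c\in A \text{ with }(x,c,y)\in\tau\text{ and }a=b\vee c\}$ and let $\Theta^*$ be the set of chips occurring in some stack of $\sigma^*$, with the order inherited from $\Theta$. Then choose a finite linearly ordered $\Theta^\circ\subseteq\mathcal{C}\setminus\Theta$ and a bijection $\iota$ from $\{y\in Y\mid\sigma^*(y,\alpha)\neq\emptyset\}$ onto $\Theta^\circ$, and set $\sigma'(y,\alpha)=\emptyset$, $\sigma'(y,0)=\sigma^*(y,0)\cup\{S\cup\{\iota(y)\}\mid S\in\sigma^*(y,\alpha)\}$, $\sigma'(y,a)=\sigma^*(y,a)$ for $a\notin\{0,\alpha\}$, and $\Theta'=\Theta^*\oplus\Theta^\circ$ (concatenation: all elements of $\Theta^*$ below all elements of $\Theta^\circ$). (ii) Weakening $(\Theta,\sigma)\xrightarrow{W}(\Theta',\sigma')$: a board on the same set with $\sigma'(x,a)\subseteq\sigma(x,a)$ for all $x,a$ and $\Theta'\subseteq\Theta$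 (induced order) the set of chips still occurring in stacks of $\sigma'$. (iii) $\gamma$-reset for a covered $\gamma\in\Theta$, $(\Theta,\sigma)\xrightarrow{R_\gamma}(\Theta',\sigma')$: for a stack $S$ let $S{\upharpoonright}\gamma=\{z\in S\mid z\le\gamma\}$ if $\gamma\in S$ and $S{\upharpoonright}\gamma=S$ otherwise; $\sigma'(x,a)=\{S{\upharpoonright}\gamma\mid S\in\sigma(x,a)\}$, and $\Theta'$ is the set of chips occurring in stacks of $\sigma'$. (iv) Population $(\Theta,\sigma)\xrightarrow{P}(\Theta,\sigma')$: $\sigma(x,0)\subseteq\sigma'(x,0)\subseteq\sigma(x,0)\cup\{\emptyset\}$ for all $x$ and $\sigma'(x,a)=\sigma(x,a)$ for $a\neq 0$. A run of $\tau\in M^\omega$ is a sequence $(\Theta_i,\sigma_i)_{i\in\omega}$ of boards together with a strictly monotone $\iota\colon\omega\to\omega$ such that for $i=\iota(n)$ one has $(\Theta_i,\sigma_i)\xrightarrow{\tau_n}(\Theta_{i+1},\sigma_{i+1})$, and for $i$ not in the image of $\iota$ the step $(\Theta_i,\sigma_i)\to(\Theta_{i+1},\sigma_{i+1})$ is a weakening, a population, or a $\gamma$-reset for some $\gamma\in\Theta_i$. A run is accepting if there are $N\in\omega$ and $\gamma\in\bigcap_{n\ge N}\Theta_n$ such that the step from index $i$ to $i+1$ is a $\gamma$-reset for infinitely many $i$. *)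

theory Defs
  imports Main "HOL-Library.Countable"
begin

text \<open>Activation algebra: the carrier is a finite type 'a of class
bounded_semilattice_sup_bot (join = sup, least element 0 = bot), together with a
distinguished element alpha different from bot. Objects of T_A are finite sets of
elements of a type 'x; a morphism records its domain, relation and codomain.\<close>

record ('x, 'a) morph =
  mdom :: "'x set"
  mrel :: "('x \<times> 'a \<times> 'x) set"
  mcod :: "'x set"

definition is_morph :: "('x, 'a) morph \<Rightarrow> bool" where
  "is_morph R \<longleftrightarrow> finite (mdom R) \<and> finite (mcod R) \<and>
     mrel R \<subseteq> mdom R \<times> UNIV \<times> mcod R"

definition rel_comp :: "('x \<times> 'a::semilattice_sup \<times> 'x) set \<Rightarrow> ('x \<times> 'a \<times> 'x) set
     \<Rightarrow> ('x \<times> 'a \<times> 'x) set" where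
  "rel_comp R R' = {(x, c, z). \<exists>y a b. (x, a, y) \<in> R \<and> (y, b, z) \<in> R' \<and> sup a b = c}"

definition id_rel :: "'x set \<Rightarrow> ('x \<times> 'a::bot \<times> 'x) set" where
  "id_rel X = {(x, bot, x) | x. x \<in> X}"

text \<open>seg tau n k = tau (n+k-1) o ... o tau n  (so P(n<m) = seg tau n (m-n)).\<close>
fun seg :: "(nat \<Rightarrow> ('x, 'a::bounded_semilattice_sup_bot) morph) \<Rightarrow> nat \<Rightarrow> nat
     \<Rightarrow> ('x \<times> 'a \<times> 'x) set" where
  "seg tau n 0 = id_rel (mdom (tau n))"
| "seg tau n (Suc k) = rel_comp (seg tau n k) (mrel (tau (n + k)))"

definition Pth :: "(nat \<Rightarrow> ('x, 'a::bounded_semilattice_sup_bot) morph) \<Rightarrow> nat \<Rightarrow> nat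
     \<Rightarrow> ('x \<times> 'a \<times> 'x) set" where
  "Pth tau n m = seg tau n (m - n)"

definition describes_path :: "(nat \<Rightarrow> ('x, 'a) morph) \<Rightarrow> bool" where
  "describes_path tau \<longleftrightarrow> (\<forall>i. mcod (tau i) = mdom (tau (Suc i)))"

definition trace_condition :: "'a::bounded_semilattice_sup_bot \<Rightarrow> (nat \<Rightarrow> ('x, 'a) morph) \<Rightarrow> bool" where
  "trace_condition alpha tau \<longleftrightarrow>
     (\<exists>k :: nat \<Rightarrow> nat. \<exists>s :: nat \<Rightarrow> 'x. strict_mono k \<and>
        (\<forall>i. s i \<in> mdom (tau (k i)) \<and> (s i, alpha, s (Suc i)) \<in> Pth tau (k i) (k (Suc i))))"

record ('x, 'c, 'a) board =
  bX :: "'x set"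
  bTheta :: "'c set"
  bLe :: "'c rel"
  bSigma :: "'x \<Rightarrow> 'a \<Rightarrow> 'c set set"

definition is_board :: "('x, 'c, 'a) board \<Rightarrow> bool" where
  "is_board B \<longleftrightarrow> finite (bX B) \<and> finite (bTheta B) \<and>
     bLe B \<subseteq> bTheta B \<times> bTheta B \<and> linear_order_on (bTheta B) (bLe B) \<and>
     (\<forall>x a. x \<notin> bX B \<longrightarrow> bSigma B x a = {}) \<and>
     (\<forall>x a S. S \<in> bSigma B x a \<longrightarrow> S \<subseteq> bTheta B) \<and>
     (\<forall>g \<in> bTheta B. \<exists>x \<in> bX B. \<exists>a S. S \<in> bSigma B x a \<and> g \<in> S)"

definition chips_of :: "('x \<Rightarrow> 'a \<Rightarrow> 'c set set) \<Rightarrow> 'c set" where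
  "chips_of sig = {g. \<exists>x a S. S \<in> sig x a \<and> g \<in> S}"

definition is_top :: "'c rel \<Rightarrow> 'c \<Rightarrow> 'c set \<Rightarrow> bool" where
  "is_top le g S \<longleftrightarrow> g \<in> S \<and> (\<forall>z \<in> S. (z, g) \<in> le)"

definition covered :: "('x, 'c, 'a) board \<Rightarrow> 'c \<Rightarrow> bool" where
  "covered B g \<longleftrightarrow> g \<in> bTheta B \<and> (\<forall>x a S. S \<in> bSigma B x a \<longrightarrow> \<not> is_top (bLe B) g S)"

definition sigma_star :: "('x, 'c, 'a::bounded_semilattice_sup_bot) board \<Rightarrow> ('x, 'a) morph
     \<Rightarrow> 'x \<Rightarrow> 'a \<Rightarrow> 'c set set" where
  "sigma_star B tau y a = {S. \<exists>x b c. S \<in> bSigma B x b \<and> (x, c, y) \<in> mrel tau \<and> a = sup b c}"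

definition succ_step :: "'a::bounded_semilattice_sup_bot \<Rightarrow> ('x, 'a) morph
     \<Rightarrow> ('x, 'c, 'a) board \<Rightarrow> ('x, 'c, 'a) board \<Rightarrow> bool" where
  "succ_step alpha tau B B' \<longleftrightarrow>
     bX B = mdom tau \<and> bX B' = mcod tau \<and>
     (let sst = sigma_star B tau; Tst = chips_of sst in
      \<exists>Tc lo \<iota>. finite Tc \<and> Tc \<inter> bTheta B = {} \<and> lo \<subseteq> Tc \<times> Tc \<and> linear_order_on Tc lo \<and>
        bij_betw \<iota> {y \<in> mcod tau. sst y alpha \<noteq> {}} Tc \<and>
        bSigma B' = (\<lambda>y a. if a = alpha then {}
                            else if a = bot then sst y bot \<union> {insert (\<iota> y) S | S. S \<in> sst y alpha}
                            else sst y a) \<and>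
        bTheta B' = Tst \<union> Tc \<and>
        bLe B' = (bLe B \<inter> (Tst \<times> Tst)) \<union> lo \<union> (Tst \<times> Tc))"

definition weak_step :: "('x, 'c, 'a) board \<Rightarrow> ('x, 'c, 'a) board \<Rightarrow> bool" where
  "weak_step B B' \<longleftrightarrow> bX B' = bX B \<and> (\<forall>x a. bSigma B' x a \<subseteq> bSigma B x a) \<and>
     bTheta B' = chips_of (bSigma B') \<and> bLe B' = bLe B \<inter> (bTheta B' \<times> bTheta B')"

definition restr :: "'c rel \<Rightarrow> 'c \<Rightarrow> 'c set \<Rightarrow> 'c set" where
  "restr le g S = (if g \<in> S then {z \<in> S. (z, g) \<in> le} else S)"

definition reset_step :: "'c \<Rightarrow> ('x, 'c, 'a) board \<Rightarrow> ('x, 'c, 'a) board \<Rightarrow> bool" where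
  "reset_step g B B' \<longleftrightarrow> covered B g \<and> bX B' = bX B \<and>
     bSigma B' = (\<lambda>x a. restr (bLe B) g ` bSigma B x a) \<and>
     bTheta B' = chips_of (bSigma B') \<and> bLe B' = bLe B \<inter> (bTheta B' \<times> bTheta B')"

definition pop_step :: "('x, 'c, 'a::bot) board \<Rightarrow> ('x, 'c, 'a) board \<Rightarrow> bool" where
  "pop_step B B' \<longleftrightarrow> bX B' = bX B \<and> bTheta B' = bTheta B \<and> bLe B' = bLe B \<and>
     (\<forall>x. bSigma B x bot \<subseteq> bSigma B' x bot \<and> bSigma B' x bot \<subseteq> bSigma B x bot \<union> {{}}) \<and>
     (\<forall>x a. a \<noteq> bot \<longrightarrow> bSigma B' x a = bSigma B x a)"

definition is_run :: "'a::bounded_semilattice_sup_bot \<Rightarrow> (nat \<Rightarrow> ('x, 'a) morph)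
     \<Rightarrow> (nat \<Rightarrow> ('x, 'c, 'a) board) \<Rightarrow> (nat \<Rightarrow> nat) \<Rightarrow> bool" where
  "is_run alpha tau B \<iota> \<longleftrightarrow> (\<forall>i. is_board (B i)) \<and> strict_mono \<iota> \<and>
     (\<forall>n. succ_step alpha (tau n) (B (\<iota> n)) (B (Suc (\<iota> n)))) \<and>
     (\<forall>i. i \<notin> range \<iota> \<longrightarrow>
        weak_step (B i) (B (Suc i)) \<or> pop_step (B i) (B (Suc i)) \<or>
        (\<exists>g \<in> bTheta (B i). reset_step g (B i) (B (Suc i))))"

definition accepting :: "(nat \<Rightarrow> ('x, 'c, 'a) board) \<Rightarrow> (nat \<Rightarrow> nat) \<Rightarrow> bool" where
  "accepting B \<iota> \<longleftrightarrow> (\<exists>N g. (\<forall>n \<ge> N. g \<in> bTheta (B n)) \<and>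
     infinite {i. i \<notin> range \<iota> \<and> reset_step g (B i) (B (Suc i))})"

end

theory Submission
  imports Defs "HOL-Library.Infinite_Set"
begin

definition chainK :: "(nat \<Rightarrow> 'v set) \<Rightarrow> (nat \<Rightarrow> 'v \<Rightarrow> 'v \<Rightarrow> bool) \<Rightarrow> nat \<Rightarrow> nat \<Rightarrow> (nat \<Rightarrow> 'v) \<Rightarrow> bool" where
  "chainK T L i j p \<longleftrightarrow> (\<forall>k. i \<le> k \<longrightarrow> k < j \<longrightarrow> L k (p k) (p (Suc k))) \<and> (\<forall>k. i \<le> k \<longrightarrow> k \<le> j \<longrightarrow> p k \<in> T k)"

lemma chainK_mono: "chainK T L i j p \<Longrightarrow> j' \<le> j \<Longrightarrow> chainK T L i j' p"
  by (auto simp: chainK_def)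

lemma chainK_shift: "chainK T L i j p \<Longrightarrow> i \<le> i' \<Longrightarrow> chainK T L i' j p"
  by (auto simp: chainK_def)

lemma pigeonK:
  assumes "finite C" "\<forall>j\<ge>i. \<exists>p. p i \<in> C \<and> chainK T L i j p"
  shows "\<exists>v\<in>C. \<forall>j\<ge>i. \<exists>p. p i = v \<and> chainK T L i j p"
proof (rule ccontr)
  assume "\<not> ?thesis"
  then have "\<forall>v\<in>C. \<exists>j\<ge>i. \<not>(\<exists>p. p i = v \<and> chainK T L i j p)" by auto
  then obtain J where J: "\<forall>v\<in>C. J v \<ge> i \<and> \<not>(\<exists>p. p i = v \<and> chainK T L i (J v) p)" by metis
  obtain p where p: "p i \<in> C" "chainK T L i (Max (J ` C) + i) p" using assms(2)[rule_format, of "Max (J ` C) + i"] by auto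
  have "J (p i) \<le> Max (J ` C) + i" using assms(1) p(1) by (simp add: trans_le_add1)
  then have "chainK T L i (J (p i)) p" using chainK_mono p(2) by blast
  with J p(1) show False by blast
qed

lemma backK:
  assumes "\<forall>i w. w \<in> T (Suc i) \<longrightarrow> (\<exists>v\<in>T i. L i v w)"
  shows "w \<in> T j \<Longrightarrow> \<exists>p. p j = w \<and> chainK T L 0 j p"
proof (induction j arbitrary: w)
  case 0
  then show ?case by (rule_tac x="\<lambda>_. w" in exI) (auto simp: chainK_def)
next
  case (Suc j)
  then obtain v where v: "v \<in> T j" "L j v w" using assms by blast
  then obtain p where p: "p j = v" "chainK T L 0 j p" using Suc.IH by blast
  show ?case
  proof (rule exI[of _ "p(Suc j := w)"], intro conjI)
    show "chainK T L 0 (Suc j) (p(Suc j := w))"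
      unfolding chainK_def
    proof (intro conjI allI impI)
      fix k assume "0 \<le> k" "k < Suc j"
      then show "L k ((p(Suc j := w)) k) ((p(Suc j := w)) (Suc k))"
        using p v by (cases "k = j") (auto simp: chainK_def)
    next
      fix k assume "0 \<le> k" "k \<le> Suc j"
      then show "(p(Suc j := w)) k \<in> T k"
        using p Suc.prems by (cases "k = Suc j") (auto simp: chainK_def)
    qed
  qed simp
qed

fun kpath :: "(nat \<Rightarrow> 'v \<Rightarrow> 'v) \<Rightarrow> 'v \<Rightarrow> nat \<Rightarrow> 'v" where
  "kpath nx v0 0 = v0"
| "kpath nx v0 (Suc i) = nx i (kpath nx v0 i)"

lemma koenig:
  assumes fin: "\<And>i. finite (T i)" and ne: "\<And>i. T i \<noteq> {}"
    and par: "\<forall>i w. w \<in> T (Suc i) \<longrightarrow> (\<exists>v\<in>T i. L i v w)"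
  shows "\<exists>f. \<forall>i. f i \<in> T i \<and> L i (f i) (f (Suc i))"
proof -
  define G where "G i v \<longleftrightarrow> (\<forall>j\<ge>i. \<exists>p. p i = v \<and> chainK T L i j p)" for i v
  have "\<forall>j\<ge>0. \<exists>p. p 0 \<in> T 0 \<and> chainK T L 0 j p"
  proof (intro allI impI)
    fix j :: nat
    obtain w where "w \<in> T j" using ne by blast
    then obtain p where "p j = w" "chainK T L 0 j p" using backK[OF par] by blast
    then show "\<exists>p. p 0 \<in> T 0 \<and> chainK T L 0 j p" by (auto simp: chainK_def)
  qed
  then have G0: "\<exists>v\<in>T 0. G 0 v" using pigeonK[OF fin] unfolding G_def by blast
  have GS: "\<exists>w\<in>T (Suc i). L i v w \<and> G (Suc i) w" if Giv: "G i v" for i v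
  proof -
    let ?C = "{w \<in> T (Suc i). L i v w}"
    have "\<forall>j\<ge>Suc i. \<exists>p. p (Suc i) \<in> ?C \<and> chainK T L (Suc i) j p"
    proof (intro allI impI)
      fix j assume j: "Suc i \<le> j"
      have "i \<le> j" using j by simp
      then obtain p where p: "p i = v" "chainK T L i j p" using Giv unfolding G_def by blast
      then have "p (Suc i) \<in> ?C" using j by (auto simp: chainK_def)
      moreover have "chainK T L (Suc i) j p" using p chainK_shift by fastforce
      ultimately show "\<exists>p. p (Suc i) \<in> ?C \<and> chainK T L (Suc i) j p" by blast
    qed
    then have "\<exists>w\<in>?C. G (Suc i) w" using pigeonK[of ?C "Suc i" T L] fin unfolding G_def by auto
    then show ?thesis by blast
  qed
  define nx where "nx i v = (SOME w. w \<in> T (Suc i) \<and> L i v w \<and> G (Suc i) w)" for i v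
  define v0 where "v0 = (SOME v. v \<in> T 0 \<and> G 0 v)"
  have inv: "kpath nx v0 i \<in> T i \<and> G i (kpath nx v0 i)" for i
  proof (induction i)
    case 0
    then show ?case using G0 unfolding v0_def by (simp, metis (mono_tags, lifting) someI_ex)
  next
    case (Suc i)
    then show ?case using GS[of i "kpath nx v0 i"] unfolding nx_def
      by (simp, metis (mono_tags, lifting) someI_ex)
  qed
  have "L i (kpath nx v0 i) (kpath nx v0 (Suc i))" for i
    using GS[of i "kpath nx v0 i"] inv[of i] unfolding nx_def
    by (simp, metis (mono_tags, lifting) someI_ex)
  then show ?thesis using inv by blast
qed


locale runL =
  fixes alpha :: "'a::bounded_semilattice_sup_bot"
    and tau :: "nat \<Rightarrow> ('x, 'a) morph"
    and B :: "nat \<Rightarrow> ('x, 'c, 'a) board"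
    and iota :: "nat \<Rightarrow> nat"
  assumes run: "is_run alpha tau B iota"
    and morph: "\<And>n. is_morph (tau n)"
begin

lemma board: "is_board (B i)" using run by (simp add: is_run_def)
lemma smono: "strict_mono iota" using run by (simp add: is_run_def)
lemma succ: "succ_step alpha (tau n) (B (iota n)) (B (Suc (iota n)))" using run by (simp add: is_run_def)
lemma other: "i \<notin> range iota \<Longrightarrow> weak_step (B i) (B (Suc i)) \<or> pop_step (B i) (B (Suc i)) \<or>
   (\<exists>g\<in>bTheta (B i). reset_step g (B i) (B (Suc i)))" using run by (simp add: is_run_def)
lemma bX_other: "i \<notin> range iota \<Longrightarrow> bX (B (Suc i)) = bX (B i)"
  using other[of i] by (auto simp: weak_step_def pop_step_def reset_step_def)

lemma sigma_sub: "S \<in> bSigma (B i) x a \<Longrightarrow> S \<subseteq> bTheta (B i)"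
  using board[of i] by (auto simp: is_board_def)

lemma iota_less: "iota m < iota n \<longleftrightarrow> m < n"
  using strict_mono_less[OF smono] .

lemma describes: "describes_path tau"
  unfolding describes_path_def
proof
  fix i
  have key: "iota i + Suc d \<le> iota (Suc i) \<Longrightarrow> bX (B (iota i + Suc d)) = mcod (tau i)" for d
  proof (induction d)
    case 0 then show ?case using succ[of i] by (simp add: succ_step_def)
  next
    case (Suc d)
    have "iota i + Suc d \<notin> range iota"
    proof
      assume "iota i + Suc d \<in> range iota" then obtain n where n: "iota i + Suc d = iota n" by blast
      then have "iota i < iota n" "iota n < iota (Suc i)" using Suc.prems by linarith+
      then show False unfolding iota_less by linarith
    qed
    then show ?case using Suc bX_other by simp
  qed
  have "iota i < iota (Suc i)" using iota_less by simp
  then have "iota i + Suc (iota (Suc i) - iota i - 1) = iota (Suc i)" by simp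
  then have "bX (B (iota (Suc i))) = mcod (tau i)" using key[of "iota (Suc i) - iota i - 1"] by simp
  moreover have "bX (B (iota (Suc i))) = mdom (tau (Suc i))" using succ[of "Suc i"] by (simp add: succ_step_def)
  ultimately show "mcod (tau i) = mdom (tau (Suc i))" by simp
qed

lemma order_pres:
  assumes "(z,h) \<in> bLe (B i)" "z \<in> bTheta (B (Suc i))" "h \<in> bTheta (B (Suc i))"
  shows "(z,h) \<in> bLe (B (Suc i))"
proof (cases "i \<in> range iota")
  case True
  then obtain n where n: "i = iota n" by blast
  have zh: "z \<in> bTheta (B i)" "h \<in> bTheta (B i)" using assms(1) board[of i] by (auto simp: is_board_def)
  from succ[of n] obtain Tc lo \<kappa> where
    "Tc \<inter> bTheta (B i) = {}"
    "bTheta (B (Suc i)) = chips_of (sigma_star (B i) (tau n)) \<union> Tc"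
    "bLe (B (Suc i)) = (bLe (B i) \<inter> (chips_of (sigma_star (B i) (tau n)) \<times> chips_of (sigma_star (B i) (tau n)))) \<union> lo \<union> (chips_of (sigma_star (B i) (tau n)) \<times> Tc)"
    unfolding succ_step_def Let_def n by blast
  then show ?thesis using assms zh by auto
next
  case False
  then show ?thesis using other[of i] assms
    by (auto simp: weak_step_def pop_step_def reset_step_def)
qed

definition mm :: "nat \<Rightarrow> nat" where "mm i = (LEAST n. i \<le> iota n)"

lemma mm_iota: "mm (iota n) = n"
  unfolding mm_def
  by (rule Least_equality) (auto simp: strict_mono_less_eq[OF smono])

lemma mm_Suc_iota: "mm (Suc (iota n)) = Suc n"
  unfolding mm_def
proof (rule Least_equality)
  show "Suc (iota n) \<le> iota (Suc n)" using iota_less[of n "Suc n"] by simp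
  fix y assume "Suc (iota n) \<le> iota y"
  then have "iota n < iota y" by simp
  then show "Suc n \<le> y" using iota_less by simp
qed

lemma mm_other: "i \<notin> range iota \<Longrightarrow> mm (Suc i) = mm i"
proof -
  assume i: "i \<notin> range iota"
  have "(\<lambda>n. Suc i \<le> iota n) = (\<lambda>n. i \<le> iota n)"
  proof
    fix n show "(Suc i \<le> iota n) = (i \<le> iota n)" using i by (cases "i = iota n") auto
  qed
  then show ?thesis unfolding mm_def by simp
qed

definition lnk :: "nat \<Rightarrow> 'x \<Rightarrow> 'a \<Rightarrow> 'c set \<Rightarrow> 'x \<Rightarrow> 'a \<Rightarrow> 'c set \<Rightarrow> bool" where
  "lnk i x a S x' a' S' \<longleftrightarrow> (i \<notin> range iota \<and> x' = x \<and> a' = a \<and> S' \<subseteq> S) \<or>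
     (\<exists>n c. i = iota n \<and> (x, c, x') \<in> mrel (tau n) \<and>
        ((S' = S \<and> a' = sup a c) \<or>
         (\<exists>c0. c0 \<notin> bTheta (B i) \<and> S' = insert c0 S \<and> sup a c = alpha \<and> a' = bot)))"

lemma parent:
  assumes S': "S' \<in> bSigma (B (Suc i)) x' a'" and hS: "h \<in> S'" and hT: "h \<in> bTheta (B i)"
  shows "\<exists>x a S. S \<in> bSigma (B i) x a \<and> h \<in> S \<and> lnk i x a S x' a' S'"
proof (cases "i \<in> range iota")
  case True
  then obtain n where n: "i = iota n" by blast
  from succ[of n] obtain Tc lo \<kappa> where
    disj: "Tc \<inter> bTheta (B i) = {}" and
    bij: "bij_betw \<kappa> {y \<in> mcod (tau n). sigma_star (B i) (tau n) y alpha \<noteq> {}} Tc" and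
    sig: "bSigma (B (Suc i)) = (\<lambda>y a. if a = alpha then {}
                            else if a = bot then sigma_star (B i) (tau n) y bot \<union> {insert (\<kappa> y) S | S. S \<in> sigma_star (B i) (tau n) y alpha}
                            else sigma_star (B i) (tau n) y a)"
    unfolding succ_step_def Let_def n by blast
  have "S' \<in> sigma_star (B i) (tau n) x' a' \<or> (a' = bot \<and> (\<exists>S. S \<in> sigma_star (B i) (tau n) x' alpha \<and> S' = insert (\<kappa> x') S))"
    using S' sig by (auto split: if_splits)
  then show ?thesis
  proof
    assume "S' \<in> sigma_star (B i) (tau n) x' a'"
    then obtain x b c where "S' \<in> bSigma (B i) x b" "(x, c, x') \<in> mrel (tau n)" "a' = sup b c"
      unfolding sigma_star_def by blast
    then show ?thesis using hS n unfolding lnk_def by blast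
  next
    assume "a' = bot \<and> (\<exists>S. S \<in> sigma_star (B i) (tau n) x' alpha \<and> S' = insert (\<kappa> x') S)"
    then obtain S where a': "a' = bot" and S: "S \<in> sigma_star (B i) (tau n) x' alpha" and SS: "S' = insert (\<kappa> x') S"
      by blast
    from S obtain x b c where xb: "S \<in> bSigma (B i) x b" "(x, c, x') \<in> mrel (tau n)" "alpha = sup b c"
      unfolding sigma_star_def by blast
    have "x' \<in> mcod (tau n)" using xb(2) morph[of n] by (auto simp: is_morph_def)
    then have "\<kappa> x' \<in> Tc" using bij S by (auto simp: bij_betw_def)
    then have k: "\<kappa> x' \<notin> bTheta (B i)" using disj by blast
    then have "h \<in> S" using hS hT SS by auto
    then show ?thesis using xb k a' SS n unfolding lnk_def by metis
  qed
next
  case False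
  then consider "weak_step (B i) (B (Suc i))" | "pop_step (B i) (B (Suc i))" |
     g where "reset_step g (B i) (B (Suc i))" using other by blast
  then show ?thesis
  proof cases
    case 1 then show ?thesis using S' hS False unfolding lnk_def weak_step_def by blast
  next
    case 2
    then have "S' \<in> bSigma (B i) x' a'" using S' hS
      by (cases "a' = bot") (auto simp: pop_step_def)
    then show ?thesis using hS False unfolding lnk_def by blast
  next
    case 3
    then obtain T0 where T0: "T0 \<in> bSigma (B i) x' a'" "S' = restr (bLe (B i)) g T0"
      using S' by (auto simp: reset_step_def)
    then have "S' \<subseteq> T0" by (auto simp: restr_def)
    then show ?thesis using T0 hS False unfolding lnk_def by blast
  qed
qed

lemma Pth_refl: "x \<in> mdom (tau t) \<Longrightarrow> (x, bot, x) \<in> Pth tau t t"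
  by (simp add: Pth_def id_rel_def)

lemma Pth_Suc: "t \<le> n \<Longrightarrow> Pth tau t (Suc n) = rel_comp (Pth tau t n) (mrel (tau n))"
  by (simp add: Pth_def Suc_diff_le)

end

context runL begin

lemma trace:
  assumes finA: "finite (UNIV :: 'a set)" and acc: "accepting B iota"
  shows "trace_condition alpha tau"
proof -
  obtain N g where gN: "\<forall>n\<ge>N. g \<in> bTheta (B n)"
    and infR: "infinite {i. i \<notin> range iota \<and> reset_step g (B i) (B (Suc i))}"
    using acc unfolding accepting_def by blast
  define T where "T i = {(x,a,S). S \<in> bSigma (B (N+i)) x a \<and> g \<in> S}" for i
  define L where "L i = (\<lambda>(x,a,S) (x',a',S'). lnk (N+i) x a S x' a' S')" for i
  have finT: "finite (T i)" for i
  proof -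
    have "T i \<subseteq> bX (B (N+i)) \<times> UNIV \<times> Pow (bTheta (B (N+i)))"
    proof (clarsimp simp: T_def)
      fix x a S assume "S \<in> bSigma (B (N + i)) x a"
      then show "x \<in> bX (B (N + i)) \<and> S \<subseteq> bTheta (B (N + i))"
        using board[of "N+i"] unfolding is_board_def by blast
    qed
    moreover have "finite (bX (B (N+i)) \<times> (UNIV::'a set) \<times> Pow (bTheta (B (N+i))))"
      using board[of "N+i"] finA unfolding is_board_def by auto
    ultimately show ?thesis by (rule finite_subset)
  qed
  have neT: "T i \<noteq> {}" for i
  proof -
    have "g \<in> bTheta (B (N+i))" using gN by simp
    then obtain x a S where "S \<in> bSigma (B (N+i)) x a" "g \<in> S"
      using board[of "N+i"] unfolding is_board_def by blast
    then show ?thesis unfolding T_def by blast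
  qed
  have parT: "\<forall>i w. w \<in> T (Suc i) \<longrightarrow> (\<exists>v\<in>T i. L i v w)"
  proof (intro allI impI)
    fix i w assume "w \<in> T (Suc i)"
    then obtain x' a' S' where w: "w = (x',a',S')" "S' \<in> bSigma (B (Suc (N+i))) x' a'" "g \<in> S'"
      unfolding T_def by auto
    have "g \<in> bTheta (B (N+i))" using gN by simp
    then obtain x a S where "S \<in> bSigma (B (N+i)) x a" "g \<in> S" "lnk (N+i) x a S x' a' S'"
      using parent[OF w(2) w(3)] by blast
    then show "\<exists>v\<in>T i. L i v w" unfolding T_def L_def w by auto
  qed
  obtain f where f: "\<And>i. f i \<in> T i \<and> L i (f i) (f (Suc i))"
    using koenig[of T L, OF finT neT parT] by blast
  define X where "X k = fst (f k)" for k
  define A where "A k = fst (snd (f k))" for k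
  define SS where "SS k = snd (snd (f k))" for k
  have fk: "f k = (X k, A k, SS k)" for k unfolding X_def A_def SS_def by simp
  have inT: "SS k \<in> bSigma (B (N+k)) (X k) (A k)" "g \<in> SS k" for k
    using f[of k] fk[of k] unfolding T_def by auto
  have lk: "lnk (N+k) (X k) (A k) (SS k) (X (Suc k)) (A (Suc k)) (SS (Suc k))" for k
    using f[of k] fk[of k] fk[of "Suc k"] unfolding L_def by auto
  define cr where "cr k \<longleftrightarrow> (\<exists>n c c0. N+k = iota n \<and> (X k, c, X (Suc k)) \<in> mrel (tau n) \<and>
       c0 \<notin> bTheta (B (N+k)) \<and> SS (Suc k) = insert c0 (SS k) \<and> sup (A k) c = alpha \<and> A (Suc k) = bot)" for k
  have nocr_sub: "\<not> cr k \<Longrightarrow> SS (Suc k) \<subseteq> SS k" for k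
    using lk[of k] unfolding lnk_def cr_def by blast
  have infC: "infinite {k. cr k}"
  proof
    assume "finite {k. cr k}"
    then obtain K where K: "\<forall>k\<ge>K. \<not> cr k"
      by (metis (mono_tags, lifting) finite_nat_set_iff_bounded_le mem_Collect_eq not_less_eq_eq)
    let ?R = "{i. i \<notin> range iota \<and> reset_step g (B i) (B (Suc i))}"
    obtain r where r: "r \<in> ?R" "N + K \<le> r"
      using infR by (meson infinite_nat_iff_unbounded_le)
    obtain r' where r': "r' \<in> ?R" "Suc r \<le> r'"
      using infR by (meson infinite_nat_iff_unbounded_le)
    define k1 where "k1 = r - N"
    define k2 where "k2 = r' - N"
    have r1: "r = N + k1" and r2: "r' = N + k2" and kk: "K \<le> k1" "k1 < k2"
      using r r' unfolding k1_def k2_def by auto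
    have base: "\<forall>z\<in>SS (Suc k1). (z,g) \<in> bLe (B (N + Suc k1))"
    proof
      fix z assume z: "z \<in> SS (Suc k1)"
      have rs: "reset_step g (B r) (B (Suc r))" using r by simp
      then obtain T0 where T0: "T0 \<in> bSigma (B r) (X (Suc k1)) (A (Suc k1))"
        "SS (Suc k1) = restr (bLe (B r)) g T0"
        using inT[of "Suc k1"] r1 by (auto simp: reset_step_def)
      then have "g \<in> T0" using inT(2)[of "Suc k1"] by (auto simp: restr_def split: if_splits)
      then have "(z,g) \<in> bLe (B r)" using T0 z by (auto simp: restr_def)
      moreover have "z \<in> bTheta (B (Suc r))" "g \<in> bTheta (B (Suc r))"
        using sigma_sub[OF inT(1)[of "Suc k1"]] z inT(2)[of "Suc k1"] r1 by auto
      ultimately show "(z,g) \<in> bLe (B (N + Suc k1))" using order_pres r1 by simp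
    qed
    have step: "SS (Suc k1 + d) \<subseteq> SS (Suc k1) \<and> (\<forall>z\<in>SS (Suc k1 + d). (z,g) \<in> bLe (B (N + (Suc k1 + d))))" for d
    proof (induction d)
      case 0 then show ?case using base by simp
    next
      case (Suc d)
      have nc: "\<not> cr (Suc k1 + d)" using K kk by simp
      then have sub: "SS (Suc (Suc k1 + d)) \<subseteq> SS (Suc k1 + d)" using nocr_sub by blast
      have "(z,g) \<in> bLe (B (N + (Suc k1 + Suc d)))" if z: "z \<in> SS (Suc k1 + Suc d)" for z
      proof -
        have "(z,g) \<in> bLe (B (N + (Suc k1 + d)))" using Suc.IH sub z by auto
        moreover have "z \<in> bTheta (B (Suc (N + (Suc k1 + d))))" "g \<in> bTheta (B (Suc (N + (Suc k1 + d))))"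
          using sigma_sub[OF inT(1)[of "Suc k1 + Suc d"]] z inT(2)[of "Suc k1 + Suc d"] by auto
        ultimately show ?thesis using order_pres by simp
      qed
      then show ?case using Suc.IH sub by auto
    qed
    have "k2 = Suc k1 + (k2 - Suc k1)" using kk by simp
    then have top: "\<forall>z\<in>SS k2. (z,g) \<in> bLe (B r')" using step[of "k2 - Suc k1"] r2 by metis
    have "covered (B r') g" using r' by (simp add: reset_step_def)
    then have "\<not> is_top (bLe (B r')) g (SS k2)" using inT(1)[of k2] r2 unfolding covered_def by blast
    then show False using top inT(2)[of k2] unfolding is_top_def by blast
  qed
  have crD: "\<exists>n c. N + k = iota n \<and> (X k, c, X (Suc k)) \<in> mrel (tau n) \<and> sup (A k) c = alpha \<and> A (Suc k) = bot"
    if "cr k" for k using that unfolding cr_def by blast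
  have memdom: "X (Suc k) \<in> mdom (tau (mm (N + Suc k)))" if ck: "cr k" for k
  proof -
    obtain n c where n: "N + k = iota n" "(X k, c, X (Suc k)) \<in> mrel (tau n)" using crD[OF ck] by blast
    have "X (Suc k) \<in> mcod (tau n)" using n(2) morph[of n] by (auto simp: is_morph_def)
    moreover have "mm (N + Suc k) = Suc n" using n(1) mm_Suc_iota by (metis add_Suc_right)
    ultimately show ?thesis using describes unfolding describes_path_def by simp
  qed
  have inv: "mm (N + Suc k0) \<le> mm (N + (Suc k0 + d)) \<and>
     (X (Suc k0), A (Suc k0 + d), X (Suc k0 + d)) \<in> Pth tau (mm (N + Suc k0)) (mm (N + (Suc k0 + d)))"
    if c0: "cr k0" and nc: "\<forall>k'. k0 < k' \<and> k' < Suc k0 + d \<longrightarrow> \<not> cr k'" for k0 d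
    using nc
  proof (induction d)
    case 0
    obtain n c where "A (Suc k0) = bot" using crD[OF c0] by blast
    then show ?case using Pth_refl[OF memdom[OF c0]] by simp
  next
    case (Suc d)
    let ?k = "Suc k0 + d"
    let ?t = "mm (N + Suc k0)"
    have IH: "?t \<le> mm (N + ?k) \<and> (X (Suc k0), A ?k, X ?k) \<in> Pth tau ?t (mm (N + ?k))"
      using Suc by auto
    have nck: "\<not> cr ?k" using Suc.prems by auto
    from lk[of ?k] show ?case unfolding lnk_def
    proof (elim disjE exE conjE)
      assume "N + ?k \<notin> range iota" "X (Suc ?k) = X ?k" "A (Suc ?k) = A ?k"
      moreover have "mm (N + Suc ?k) = mm (N + ?k)" using mm_other[OF \<open>N + ?k \<notin> range iota\<close>] by simp
      ultimately show ?thesis using IH by simp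
    next
      fix n c assume n: "N + ?k = iota n" "(X ?k, c, X (Suc ?k)) \<in> mrel (tau n)"
        "SS (Suc ?k) = SS ?k" "A (Suc ?k) = sup (A ?k) c"
      have m1: "mm (N + ?k) = n" using n(1) mm_iota by metis
      have m2: "mm (N + Suc ?k) = Suc n" using n(1) mm_Suc_iota by (metis add_Suc_right)
      have "(X (Suc k0), A (Suc ?k), X (Suc ?k)) \<in> rel_comp (Pth tau ?t n) (mrel (tau n))"
        using IH n m1 unfolding rel_comp_def by auto
      then show ?thesis using Pth_Suc[of ?t n] IH m1 m2 by simp
    next
      fix n c c0 assume "N + ?k = iota n" "(X ?k, c, X (Suc ?k)) \<in> mrel (tau n)"
        "c0 \<notin> bTheta (B (N + ?k))" "SS (Suc ?k) = insert c0 (SS ?k)" "sup (A ?k) c = alpha" "A (Suc ?k) = bot"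
      then have "cr ?k" unfolding cr_def by blast
      with nck show ?thesis by blast
    qed
  qed
  have salpha: "(X (Suc k0), alpha, X (Suc k1)) \<in> Pth tau (mm (N + Suc k0)) (mm (N + Suc k1))"
    if H: "cr k0" "cr k1" "k0 < k1" "\<forall>k'. k0 < k' \<and> k' < k1 \<longrightarrow> \<not> cr k'" for k0 k1
  proof -
    let ?t = "mm (N + Suc k0)"
    have e: "Suc k0 + (k1 - Suc k0) = k1" using that(3) by simp
    have IH: "?t \<le> mm (N + k1) \<and> (X (Suc k0), A k1, X k1) \<in> Pth tau ?t (mm (N + k1))"
      using inv[OF that(1), of "k1 - Suc k0"] that(4) e by simp
    obtain n c where n: "N + k1 = iota n" "(X k1, c, X (Suc k1)) \<in> mrel (tau n)" "sup (A k1) c = alpha"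
      using crD[OF H(2)] by blast
    have m1: "mm (N + k1) = n" using n(1) mm_iota by metis
    have m2: "mm (N + Suc k1) = Suc n" using n(1) mm_Suc_iota by (metis add_Suc_right)
    have "(X (Suc k0), alpha, X (Suc k1)) \<in> rel_comp (Pth tau ?t n) (mrel (tau n))"
      using IH n m1 unfolding rel_comp_def by auto
    then show ?thesis using Pth_Suc[of ?t n] IH m1 m2 by simp
  qed
  define ce where "ce = enumerate {k. cr k}"
  have ceC: "cr (ce e)" for e using enumerate_in_set[OF infC] unfolding ce_def by blast
  have ceL: "ce e < ce (Suc e)" for e using infC unfolding ce_def by simp
  have ceB: "\<not> cr k'" if "ce e < k'" "k' < ce (Suc e)" for e k'
  proof
    assume "cr k'"
    then obtain j where j: "ce j = k'" using enumerate_Ex[OF infC] unfolding ce_def by blast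
    then have "e < j" "j < Suc e" using \<open>ce e < k'\<close> \<open>k' < ce (Suc e)\<close> infC unfolding ce_def by auto
    then show False by simp
  qed
  define kk where "kk e = mm (N + Suc (ce e))" for e
  define s where "s e = X (Suc (ce e))" for e
  have mmcr: "\<exists>n. N + k = iota n \<and> mm (N + Suc k) = Suc n" if "cr k" for k
    using crD[OF that] mm_Suc_iota by (metis add_Suc_right)
  have "strict_mono kk"
    unfolding strict_mono_Suc_iff
  proof
    fix e
    obtain n1 where n1: "N + ce e = iota n1" "kk e = Suc n1" using mmcr[OF ceC[of e]] unfolding kk_def by blast
    obtain n2 where n2: "N + ce (Suc e) = iota n2" "kk (Suc e) = Suc n2" using mmcr[OF ceC[of "Suc e"]] unfolding kk_def by blast
    have "iota n1 < iota n2" using n1 n2 ceL[of e] by linarith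
    then show "kk e < kk (Suc e)" using n1 n2 iota_less by simp
  qed
  moreover have "s e \<in> mdom (tau (kk e)) \<and> (s e, alpha, s (Suc e)) \<in> Pth tau (kk e) (kk (Suc e))" for e
    using memdom[OF ceC[of e]] salpha[OF ceC[of e] ceC[of "Suc e"] ceL[of e]] ceB[of e]
    unfolding s_def kk_def by blast
  ultimately show ?thesis unfolding trace_condition_def by blast
qed

end

theorem mainTheorem3:
  fixes alpha :: "'a::{finite, bounded_semilattice_sup_bot}"
    and M :: "('x, 'a) morph set"
    and tau :: "nat \<Rightarrow> ('x, 'a) morph"
    and B :: "nat \<Rightarrow> ('x, 'c::countable, 'a) board"
    and \<iota> :: "nat \<Rightarrow> nat"
  assumes "alpha \<noteq> bot"
    and "infinite (UNIV :: 'c set)"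
    and "finite M" and "\<forall>R \<in> M. is_morph R"
    and "\<forall>n. tau n \<in> M"
    and "is_run alpha tau B \<iota>"
    and "accepting B \<iota>"
  shows "describes_path tau \<and> trace_condition alpha tau"
proof -
  interpret runL alpha tau B \<iota>
    using assms(4,5,6) by unfold_locales auto
  show ?thesis using describes trace[OF finite_UNIV assms(7)] by blast
qed

end
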